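(* Let $N$ be a finite set, $C\subseteq N$ with $|C|\ge2$, and $k\in\{1,\ldots,|C|-1\}$. Then the generalized cluster inequality $$\sum_{a\in C}\ \sum_{B\subseteq N\setminus\{a\}:\,|B\cap C|\ge k}\eta(a|B)\le |C|-k$$ defines an SE facet of the family-variable polytope $P_N$.
   Context: $\mathrm{DAG}(N)$ is the set of acyclic directed graphs over $N$; $\mathrm{pa}_G(a)$ is the parent set of $a$ in $G$; $G\sim H$ (Markov equivalence) means same adjacencies and same immoralities (induced $a\to c\leftarrow b$ with $a,b$ non-adjacent). $\Upsilon=\{(a|B): a\in N,\ \emptyset\neq B\subseteq N\setminus\{a\}\}$; $\eta_G\in\mathbb{R}^{\Upsilon}$ has $\eta_G(a|B)=1$ if $B=\mathrm{pa}_G(a)$, else $0$; $P_N=\mathrm{conv}\{\eta_G:G\in\mathrm{DAG}(N)\}$. $o$ is an SE objective if $\langle o,\eta_G\rangle=\langle o,\eta_H\rangle$ whenever $G\sim H$; a facet $F$ of $P_N$ is SE if there exist an SE objective $o$ and $u$ with $P_N\subseteq\{v:\langle o,v\rangle\le u\}$ and $F=\{v\in P_N:\langle o,v\rangle=u\}$. *)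

theory Defs
  imports "HOL-Analysis.Analysis"
begin

text \<open>The finite ground set N is the (finite) type 'n, i.e. N = UNIV.
  A directed graph over N is an edge relation G; (b,a) \<in> G means b \<rightarrow> a.
  DAG(N) = acyclic relations on 'n.\<close>

definition is_DAG :: "('n \<times> 'n) set \<Rightarrow> bool" where
  "is_DAG G \<longleftrightarrow> acyclic G"

definition pa :: "('n \<times> 'n) set \<Rightarrow> 'n \<Rightarrow> 'n set" where
  "pa G a = {b. (b, a) \<in> G}"

definition adjacent :: "('n \<times> 'n) set \<Rightarrow> 'n \<Rightarrow> 'n \<Rightarrow> bool" where
  "adjacent G a b \<longleftrightarrow> (a, b) \<in> G \<or> (b, a) \<in> G"

definition immorality :: "('n \<times> 'n) set \<Rightarrow> 'n \<Rightarrow> 'n \<Rightarrow> 'n \<Rightarrow> bool" where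
  "immorality G a c b \<longleftrightarrow> (a, c) \<in> G \<and> (b, c) \<in> G \<and> a \<noteq> b \<and> \<not> adjacent G a b"

definition markov_equiv :: "('n \<times> 'n) set \<Rightarrow> ('n \<times> 'n) set \<Rightarrow> bool" where
  "markov_equiv G H \<longleftrightarrow>
     (\<forall>a b. adjacent G a b \<longleftrightarrow> adjacent H a b) \<and>
     (\<forall>a c b. immorality G a c b \<longleftrightarrow> immorality H a c b)"

text \<open>Index set Upsilon = {(a|B) : B nonempty, a \<notin> B}. Vectors of R^Upsilon are
  represented in real^('n \<times> 'n set), with coordinates outside Upsilon unused (zero
  for all points of P_N).\<close>
definition Ups :: "('n \<times> 'n set) set" where
  "Ups = {(a, B). B \<noteq> {} \<and> a \<notin> B}"

definition eta :: "('n \<times> 'n) set \<Rightarrow> real ^ ('n::finite \<times> 'n set)" where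
  "eta G = (\<chi> p. if p \<in> Ups \<and> snd p = pa G (fst p) then 1 else 0)"

definition family_polytope :: "(real ^ ('n::finite \<times> 'n set)) set" where
  "family_polytope = convex hull {eta G | G. is_DAG G}"

definition SE_objective :: "real ^ ('n::finite \<times> 'n set) \<Rightarrow> bool" where
  "SE_objective w \<longleftrightarrow>
     (\<forall>G H. is_DAG G \<longrightarrow> is_DAG H \<longrightarrow> markov_equiv G H \<longrightarrow> w \<bullet> eta G = w \<bullet> eta H)"

definition SE_facet :: "(real ^ ('n::finite \<times> 'n set)) set \<Rightarrow> bool" where
  "SE_facet F \<longleftrightarrow> F facet_of family_polytope \<and>
     (\<exists>w u. SE_objective w \<and> family_polytope \<subseteq> {v. w \<bullet> v \<le> u} \<and>
            F = {v \<in> family_polytope. w \<bullet> v = u})"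

definition gen_cluster_lhs :: "'n set \<Rightarrow> nat \<Rightarrow> real ^ ('n::finite \<times> 'n set) \<Rightarrow> real" where
  "gen_cluster_lhs C k v =
     (\<Sum>a\<in>C. \<Sum>B\<in>{B. B \<subseteq> UNIV - {a} \<and> card (B \<inter> C) \<ge> k}. v $ (a, B))"

end

theory Submission
imports Defs
begin

definition gr :: "('n \<Rightarrow> 'n set) \<Rightarrow> ('n \<times> 'n) set" where
  "gr \<pi> = {(b, a). b \<in> \<pi> a}"

lemma pa_gr[simp]: "pa (gr \<pi>) a = \<pi> a"
  by (simp add: pa_def gr_def)

lemma acyclic_rank:
  assumes "\<And>a b. b \<in> \<pi> a \<Longrightarrow> r b < (r a :: nat)"
  shows "is_DAG (gr \<pi>)"
proof -
  have "(x, y) \<in> (gr \<pi>)\<^sup>+ \<Longrightarrow> r x < r y" for x y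
  proof (induction rule: trancl_induct)
    case (base y) then show ?case using assms by (auto simp: gr_def)
  next
    case (step y z) then show ?case using assms by (simp add: gr_def) (meson less_trans)
  qed
  then show ?thesis unfolding is_DAG_def acyclic_def by blast
qed

lemma inner_eta:
  fixes w :: "real ^ ('n::finite \<times> 'n set)"
  shows "w \<bullet> eta G = (\<Sum>a\<in>UNIV. if (a, pa G a) \<in> Ups then w $ (a, pa G a) else 0)"
proof -
  have "w \<bullet> eta G = (\<Sum>p\<in>UNIV. if p \<in> Ups \<and> snd p = pa G (fst p) then w $ p else 0)"
    by (simp add: inner_vec_def eta_def if_distrib cong: if_cong)
  also have "\<dots> = (\<Sum>a\<in>UNIV. \<Sum>B\<in>UNIV. if (a,B) \<in> Ups \<and> B = pa G a then w $ (a,B) else 0)"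
    by (simp add: sum.cartesian_product split_def flip: UNIV_Times_UNIV) (intro sum.cong; auto)
  also have "\<dots> = (\<Sum>a\<in>UNIV. if (a, pa G a) \<in> Ups then w $ (a, pa G a) else 0)"
  proof (rule sum.cong[OF refl])
    fix a
    have "(\<Sum>B\<in>UNIV. if (a,B) \<in> Ups \<and> B = pa G a then w $ (a,B) else 0)
        = (\<Sum>B\<in>UNIV. if B = pa G a then (if (a,B) \<in> Ups then w $ (a,B) else 0) else 0)"
      by (rule sum.cong) auto
    then show "(\<Sum>B\<in>UNIV. if (a,B) \<in> Ups \<and> B = pa G a then w $ (a,B) else 0) = (if (a, pa G a) \<in> Ups then w $ (a, pa G a) else 0)"
      by (simp add: sum.delta)
  qed
  finally show ?thesis .
qed

definition cvec :: "'n set \<Rightarrow> nat \<Rightarrow> real ^ ('n::finite \<times> 'n set)" where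
  "cvec C k = (\<chi> p. if fst p \<in> C \<and> snd p \<subseteq> UNIV - {fst p} \<and> k \<le> card (snd p \<inter> C) then 1 else 0)"

lemma lhs_inner: "gen_cluster_lhs C k v = cvec C k \<bullet> v"
proof -
  let ?Q = "Sigma C (\<lambda>a. {B. B \<subseteq> UNIV - {a} \<and> card (B \<inter> C) \<ge> k})"
  have "cvec C k \<bullet> v = (\<Sum>p\<in>UNIV. if p \<in> ?Q then v $ p else 0)"
    by (auto simp: inner_vec_def cvec_def intro!: sum.cong)
  also have "\<dots> = (\<Sum>p\<in>?Q. v $ p)"
    by (simp add: sum.If_cases)
  also have "\<dots> = gen_cluster_lhs C k v"
    unfolding gen_cluster_lhs_def by (simp add: sum.Sigma)
  finally show ?thesis by simp
qed

definition dg :: "'n set \<Rightarrow> ('n \<times> 'n) set \<Rightarrow> 'n \<Rightarrow> nat" where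
  "dg C G a = card (pa G a \<inter> C)"

lemma DAG_irrefl: "is_DAG G \<Longrightarrow> (a, a) \<notin> G"
  unfolding is_DAG_def acyclic_def by blast

lemma DAG_not_pa: "is_DAG G \<Longrightarrow> a \<notin> pa G a"
  using DAG_irrefl[of G a] by (auto simp: pa_def)

lemma DAG_asym: "is_DAG G \<Longrightarrow> (a, b) \<in> G \<Longrightarrow> (b, a) \<notin> G"
  unfolding is_DAG_def acyclic_def by (meson r_into_trancl trancl_trans)

lemma lhs_eta:
  fixes C :: "'n::finite set"
  assumes "is_DAG G" "1 \<le> k"
  shows "gen_cluster_lhs C k (eta G) = real (card {a\<in>C. k \<le> dg C G a})"
proof -
  have "gen_cluster_lhs C k (eta G) = (\<Sum>a\<in>UNIV. if a \<in> {a\<in>C. k \<le> dg C G a} then 1 else 0)"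
    unfolding lhs_inner inner_eta
  proof (rule sum.cong[OF refl])
    fix a
    have na: "a \<notin> pa G a" using DAG_not_pa[OF assms(1)] .
    show "(if (a, pa G a) \<in> Ups then cvec C k $ (a, pa G a) else 0) =
         (if a \<in> {a \<in> C. k \<le> dg C G a} then 1 else 0)"
    proof (cases "k \<le> dg C G a")
      case True
      then have "pa G a \<noteq> {}" using assms(2) by (auto simp: dg_def)
      then show ?thesis using True na by (auto simp: Ups_def cvec_def dg_def)
    qed (auto simp: Ups_def cvec_def dg_def)
  qed
  also have "\<dots> = real (card {a\<in>C. k \<le> dg C G a})"
    by (simp add: sum.If_cases)
  finally show ?thesis .
qed

lemma sink_exists:
  fixes G :: "('n::finite \<times> 'n) set"
  assumes "is_DAG G" "T \<noteq> {}"
  shows "\<exists>s\<in>T. \<forall>y\<in>T. (s, y) \<notin> G"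
proof -
  have "wf (G\<inverse>)" using assms(1) unfolding is_DAG_def
    by (intro finite_acyclic_wf) auto
  then obtain z where "z \<in> T" "\<forall>y. (y, z) \<in> G\<inverse> \<longrightarrow> y \<notin> T"
    using assms(2) unfolding wf_eq_minimal by blast
  then show ?thesis by auto
qed

lemma low_count:
  fixes C :: "'n::finite set"
  assumes "is_DAG G" "k \<le> card C"
  shows "k \<le> card {a\<in>C. dg C G a < k}"
  using assms(2)
proof (induction "card C" arbitrary: C)
  case 0 then show ?case by simp
next
  case (Suc n)
  have "C \<noteq> {}" using Suc.hyps(2) by auto
  then obtain s where s: "s \<in> C" "\<forall>y\<in>C. (s, y) \<notin> G"
    using sink_exists[OF assms(1)] by blast
  let ?C' = "C - {s}"
  have cC': "card ?C' = n" using Suc.hyps(2) s by simp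
  have eq: "dg ?C' G a = dg C G a" if "a \<in> ?C'" for a
  proof -
    have "pa G a \<inter> ?C' = pa G a \<inter> C" using s that by (auto simp: pa_def)
    then show ?thesis by (simp add: dg_def)
  qed
  show ?case
  proof (cases "k \<le> n")
    case True
    then have "k \<le> card {a\<in>?C'. dg ?C' G a < k}" using Suc.hyps(1)[of ?C'] cC' by simp
    also have "\<dots> \<le> card {a\<in>C. dg C G a < k}"
      by (rule card_mono) (use eq in auto)
    finally show ?thesis .
  next
    case False
    then have k: "k = card C" using Suc.hyps(2) Suc.prems by simp
    have "dg C G a < k" if "a \<in> C" for a
    proof -
      have "pa G a \<inter> C \<subseteq> C - {a}" using DAG_not_pa[OF assms(1)] by auto
      then have "dg C G a \<le> card (C - {a})" unfolding dg_def by (intro card_mono) auto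
      moreover have "card (C - {a}) = card C - 1" using that by (simp add: card_Diff_singleton)
      moreover have "card C \<ge> 1" using \<open>C \<noteq> {}\<close> by (simp add: Suc_leI card_gt_0_iff)
      ultimately show ?thesis using k by linarith
    qed
    then have "{a\<in>C. dg C G a < k} = C" by auto
    then show ?thesis using k by simp
  qed
qed


lemma high_bound:
  fixes C :: "'n::finite set"
  assumes "is_DAG G" "k \<le> card C"
  shows "card {a\<in>C. k \<le> dg C G a} \<le> card C - k"
proof -
  have "card {a\<in>C. k \<le> dg C G a} + card {a\<in>C. dg C G a < k} = card C"
  proof -
    have "card C = card ({a\<in>C. k \<le> dg C G a} \<union> {a\<in>C. dg C G a < k})"
      by (rule arg_cong[where f=card]) auto
    also have "\<dots> = card {a\<in>C. k \<le> dg C G a} + card {a\<in>C. dg C G a < k}"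
      by (rule card_Un_disjoint) auto
    finally show ?thesis by simp
  qed
  then show ?thesis using low_count[OF assms] by linarith
qed

definition Pp :: "('n \<times> 'n) set \<Rightarrow> 'n set \<Rightarrow> bool" where
  "Pp G T \<longleftrightarrow> (\<exists>v\<in>T. \<forall>x\<in>T - {v}. (x, v) \<in> G)"

lemma markov_equiv_sym: "markov_equiv G H \<Longrightarrow> markov_equiv H G"
  unfolding markov_equiv_def by auto

lemma Pp_transfer:
  fixes G :: "('n::finite \<times> 'n) set"
  assumes G: "is_DAG G" and H: "is_DAG H" and me: "markov_equiv G H" and P: "Pp G T"
  shows "Pp H T"
proof -
  obtain v where v: "v \<in> T" "\<forall>x\<in>T - {v}. (x, v) \<in> G" using P unfolding Pp_def by blast
  then have "T \<noteq> {}" by auto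
  then obtain w where w: "w \<in> T" "\<forall>y\<in>T. (w, y) \<notin> H" using sink_exists[OF H] by blast
  have adj: "adjacent G a b \<longleftrightarrow> adjacent H a b" for a b using me unfolding markov_equiv_def by blast
  have imm: "immorality G a c b \<longleftrightarrow> immorality H a c b" for a b c using me unfolding markov_equiv_def by blast
  have "(u, w) \<in> H" if u: "u \<in> T" "u \<noteq> w" for u
  proof (cases "w = v")
    case True
    then have "adjacent G u w" using v u by (auto simp: adjacent_def)
    then have "adjacent H u w" using adj by blast
    then show ?thesis using w u by (auto simp: adjacent_def)
  next
    case False
    then have "(w, v) \<in> G" using v w by auto
    then have "adjacent H w v" using adj by (auto simp: adjacent_def)
    then have vw: "(v, w) \<in> H" using w v by (auto simp: adjacent_def)
    show ?thesis
    proof (cases "u = v")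
      case True then show ?thesis using vw by simp
    next
      case uv: False
      show ?thesis
      proof (cases "adjacent H u w")
        case True then show ?thesis using w u by (auto simp: adjacent_def)
      next
        case False
        then have "\<not> adjacent G u w" using adj by blast
        moreover have "(u, v) \<in> G" using v u uv by auto
        ultimately have "immorality G u v w" using \<open>(w, v) \<in> G\<close> u by (auto simp: immorality_def)
        then have "immorality H u v w" using imm by blast
        then have "(w, v) \<in> H" by (simp add: immorality_def)
        then show ?thesis using w v by auto
      qed
    qed
  qed
  then show ?thesis unfolding Pp_def using w by blast
qed

lemma pow_sum:
  fixes x :: real
  assumes "finite A"
  shows "(\<Sum>S\<in>Pow A. x ^ card S) = (1 + x) ^ card A"
  using assms
proof (induction A rule: finite_induct)
  case empty then show ?case by simp
next
  case (insert a A)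
  have inj: "inj_on (insert a) (Pow A)" using insert.hyps(2) by (auto simp: inj_on_def)
  have "(\<Sum>S\<in>Pow (insert a A). x ^ card S) = (\<Sum>S\<in>Pow A \<union> insert a ` Pow A. x ^ card S)"
    by (simp only: Pow_insert)
  also have "\<dots> = (\<Sum>S\<in>Pow A. x ^ card S) + (\<Sum>S\<in>insert a ` Pow A. x ^ card S)"
    by (rule sum.union_disjoint) (use insert.hyps in auto)
  also have "(\<Sum>S\<in>insert a ` Pow A. x ^ card S) = (\<Sum>S\<in>Pow A. x ^ card (insert a S))"
    by (simp add: sum.reindex[OF inj])
  also have "\<dots> = (\<Sum>S\<in>Pow A. x * x ^ card S)"
  proof (rule sum.cong[OF refl])
    fix S assume "S \<in> Pow A"
    then have "finite S" "a \<notin> S" using insert.hyps finite_subset by auto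
    then show "x ^ card (insert a S) = x * x ^ card S" by simp
  qed
  finally show ?case using insert.IH insert.hyps by (simp add: sum_distrib_left[symmetric] algebra_simps)
qed

definition TT :: "'n set \<Rightarrow> ('n \<times> 'n) set \<Rightarrow> 'n set set" where
  "TT C G = {T. T \<subseteq> C \<and> 2 \<le> card T \<and> Pp G T}"

lemma poly_identity:
  fixes C :: "'n::finite set" and x :: real
  assumes G: "is_DAG G"
  shows "(\<Sum>v\<in>C. (1 + x) ^ dg C G v) = real (card C) + (\<Sum>T\<in>TT C G. x ^ (card T - 1))"
proof -
  let ?Q = "\<lambda>v. Pow (pa G v \<inter> C) - {{}}"
  have "(\<Sum>v\<in>C. (1 + x) ^ dg C G v) = (\<Sum>v\<in>C. \<Sum>S\<in>Pow (pa G v \<inter> C). x ^ card S)"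
    unfolding dg_def
    by (intro sum.cong refl) (simp only: pow_sum[OF finite, symmetric])
  also have "\<dots> = (\<Sum>v\<in>C. 1 + (\<Sum>S\<in>?Q v. x ^ card S))"
    by (intro sum.cong refl) (simp add: sum.remove[of _ "{}"])
  also have "\<dots> = real (card C) + (\<Sum>v\<in>C. \<Sum>S\<in>?Q v. x ^ card S)"
    by (simp add: sum.distrib)
  also have "(\<Sum>v\<in>C. \<Sum>S\<in>?Q v. x ^ card S) = (\<Sum>p\<in>Sigma C ?Q. x ^ card (snd p))"
    by (simp add: sum.Sigma split_def)
  also have "\<dots> = (\<Sum>p\<in>Sigma C ?Q. x ^ (card (insert (fst p) (snd p)) - 1))"
  proof (rule sum.cong[OF refl])
    fix p assume "p \<in> Sigma C ?Q"
    then have "fst p \<notin> snd p" using DAG_not_pa[OF G] by auto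
    then show "x ^ card (snd p) = x ^ (card (insert (fst p) (snd p)) - 1)" by simp
  qed
  also have "\<dots> = (\<Sum>T\<in>TT C G. x ^ (card T - 1))"
  proof (rule sum.reindex_bij_betw[where h="\<lambda>p. insert (fst p) (snd p)"])
    show "bij_betw (\<lambda>p. insert (fst p) (snd p)) (Sigma C ?Q) (TT C G)"
      unfolding bij_betw_def
    proof
      show "inj_on (\<lambda>p. insert (fst p) (snd p)) (Sigma C ?Q)"
      proof (rule inj_onI)
        fix p q assume p: "p \<in> Sigma C ?Q" and q: "q \<in> Sigma C ?Q"
          and eq: "insert (fst p) (snd p) = insert (fst q) (snd q)"
        obtain a S where pa: "p = (a, S)" by (cases p)
        obtain b R where qb: "q = (b, R)" by (cases q)
        have S: "S \<subseteq> pa G a" "a \<notin> S" and R: "R \<subseteq> pa G b" "b \<notin> R"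
          using p q DAG_not_pa[OF G] pa qb by auto
        have ab: "a = b"
        proof (rule ccontr)
          assume "a \<noteq> b"
          then have "b \<in> S" "a \<in> R" using eq pa qb by auto
          then have "(b, a) \<in> G" "(a, b) \<in> G" using S R by (auto simp: pa_def)
          then show False using DAG_asym[OF G] by blast
        qed
        then have "S = R" using eq S R pa qb by (metis Diff_insert_absorb fst_conv snd_conv)
        then show "p = q" using ab pa qb by simp
      qed
    next
      show "(\<lambda>p. insert (fst p) (snd p)) ` Sigma C ?Q = TT C G"
      proof
        show "(\<lambda>p. insert (fst p) (snd p)) ` Sigma C ?Q \<subseteq> TT C G"
        proof
          fix T assume "T \<in> (\<lambda>p. insert (fst p) (snd p)) ` Sigma C ?Q"
          then obtain p where p: "p \<in> Sigma C ?Q" "T = insert (fst p) (snd p)" by blast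
          obtain a S where "p = (a, S)" by (cases p)
          then have aS: "a \<in> C" "S \<subseteq> pa G a \<inter> C" "S \<noteq> {}" "T = insert a S" using p by auto
          have "a \<notin> S" using aS DAG_not_pa[OF G] by auto
          moreover have "card S \<ge> 1" using aS by (simp add: Suc_leI card_gt_0_iff finite_subset)
          ultimately have "card T \<ge> 2" using aS by simp
          moreover have "Pp G T" unfolding Pp_def using aS by (auto simp: pa_def)
          ultimately show "T \<in> TT C G" using aS by (auto simp: TT_def)
        qed
      next
        show "TT C G \<subseteq> (\<lambda>p. insert (fst p) (snd p)) ` Sigma C ?Q"
        proof
          fix T assume "T \<in> TT C G"
          then have T: "T \<subseteq> C" "2 \<le> card T" and "Pp G T" by (auto simp: TT_def)
          then obtain v where v: "v \<in> T" "\<forall>x\<in>T - {v}. (x, v) \<in> G" unfolding Pp_def by blast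
          have "T - {v} \<noteq> {}"
          proof
            assume "T - {v} = {}"
            then have "T = {v}" using v by auto
            then show False using T by simp
          qed
          moreover have "T - {v} \<subseteq> pa G v \<inter> C" using v T by (auto simp: pa_def)
          ultimately have "(v, T - {v}) \<in> Sigma C ?Q" using v T by auto
          moreover have "T = insert (fst (v, T - {v})) (snd (v, T - {v}))" using v by auto
          ultimately show "T \<in> (\<lambda>p. insert (fst p) (snd p)) ` Sigma C ?Q" by blast
        qed
      qed
    qed
  qed
  finally show ?thesis .
qed

lemma group_sum:
  fixes f :: "nat \<Rightarrow> real" and C :: "'n::finite set"
  assumes "\<forall>v\<in>C. d v \<le> K"
  shows "(\<Sum>v\<in>C. f (d v)) = (\<Sum>i\<le>K. real (card {v\<in>C. d v = i}) * f i)"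
proof -
  have "(\<Sum>v\<in>C. f (d v)) = (\<Sum>v\<in>C. \<Sum>i\<le>K. if i = d v then f i else 0)"
    using assms by (intro sum.cong refl) (simp add: sum.delta)
  also have "\<dots> = (\<Sum>i\<le>K. \<Sum>v\<in>C. if i = d v then f i else 0)"
    by (rule sum.swap)
  also have "\<dots> = (\<Sum>i\<le>K. real (card {v\<in>C. d v = i}) * f i)"
  proof (rule sum.cong[OF refl])
    fix i
    have "(\<Sum>v\<in>C. if i = d v then f i else 0) = (\<Sum>v\<in>{v\<in>C. d v = i}. f i)"
      by (simp add: sum.If_cases Int_def eq_commute conj_commute)
    then show "(\<Sum>v\<in>C. if i = d v then f i else 0) = real (card {v\<in>C. d v = i}) * f i" by simp
  qed
  finally show ?thesis .
qed

lemma SE_invariant: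
  fixes C :: "'n::finite set"
  assumes G: "is_DAG G" and H: "is_DAG H" and me: "markov_equiv G H"
  shows "card {a\<in>C. k \<le> dg C G a} = card {a\<in>C. k \<le> dg C H a}"
proof -
  have TTeq: "TT C G = TT C H"
    using Pp_transfer[OF G H me] Pp_transfer[OF H G markov_equiv_sym[OF me]] unfolding TT_def by blast
  have eqy: "(\<Sum>v\<in>C. y ^ dg C G v) = (\<Sum>v\<in>C. y ^ dg C H v)" for y :: real
  proof -
    have "(\<Sum>v\<in>C. (1 + (y - 1)) ^ dg C G v) = (\<Sum>v\<in>C. (1 + (y - 1)) ^ dg C H v)"
      unfolding poly_identity[OF G] poly_identity[OF H] TTeq ..
    then show ?thesis by simp
  qed
  define K where "K = card C"
  define N where "N X i = real (card {v\<in>C. dg C X v = i})" for X i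
  have bd: "\<forall>v\<in>C. dg C X v \<le> K" for X :: "('n \<times> 'n) set"
    unfolding dg_def K_def by (auto intro: card_mono)
  have gs: "(\<Sum>v\<in>C. f (dg C X v)) = (\<Sum>i\<le>K. N X i * f i)" for X f
    unfolding N_def by (rule group_sum[OF bd])
  have "\<forall>y::real. (\<Sum>i\<le>K. N G i * y ^ i) = (\<Sum>i\<le>K. N H i * y ^ i)"
  proof
    fix y :: real
    show "(\<Sum>i\<le>K. N G i * y ^ i) = (\<Sum>i\<le>K. N H i * y ^ i)"
      using gs[of "\<lambda>i. y ^ i" G] gs[of "\<lambda>i. y ^ i" H] eqy[of y] by simp
  qed
  then have ceq: "\<forall>i\<le>K. N G i = N H i"
    by (simp only: polyfun_eq_coeffs)
  have r: "real (card {a\<in>C. k \<le> dg C X a}) = (\<Sum>i\<le>K. N X i * (if k \<le> i then 1 else 0))" for X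
  proof -
    have "real (card {a\<in>C. k \<le> dg C X a}) = (\<Sum>v\<in>C. (\<lambda>i. if k \<le> i then 1 else (0::real)) (dg C X v))"
      by (simp add: sum.If_cases Int_def conj_commute)
    then show ?thesis using gs by simp
  qed
  have "real (card {a\<in>C. k \<le> dg C G a}) = real (card {a\<in>C. k \<le> dg C H a})"
    unfolding r using ceq by (intro sum.cong refl) simp
  then show ?thesis by simp
qed


definition WW :: "real ^ ('n::finite \<times> 'n set) \<Rightarrow> 'n \<Rightarrow> 'n set \<Rightarrow> real" where
  "WW w a B = (if (a, B) \<in> Ups then w $ (a, B) else 0)"

lemma inner_gr: "w \<bullet> eta (gr \<pi>) = (\<Sum>a\<in>UNIV. WW w a (\<pi> a))"
  by (simp only: inner_eta WW_def pa_gr)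

lemma WW_empty[simp]: "WW w a {} = 0"
  by (simp add: WW_def Ups_def)

definition std :: "'n set \<Rightarrow> 'n set \<Rightarrow> 'n \<Rightarrow> 'n set" where
  "std C L a = (if a \<in> C - L then L else {})"

definition hs :: "'n set \<Rightarrow> nat \<Rightarrow> ('n \<Rightarrow> 'n set) \<Rightarrow> 'n set" where
  "hs C k \<pi> = {a\<in>C. k \<le> card (\<pi> a \<inter> C)}"

lemma dg_gr: "dg C (gr \<pi>) a = card (\<pi> a \<inter> C)"
  by (simp add: dg_def)

lemma hs_upd:
  assumes "x \<notin> C \<or> (k \<le> card (B \<inter> C) \<longleftrightarrow> k \<le> card (\<pi> x \<inter> C))"
  shows "hs C k (\<pi>(x := B)) = hs C k \<pi>"
  using assms unfolding hs_def by auto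

lemma std_DAG: "is_DAG (gr (std C L))"
  by (rule acyclic_rank[where r="\<lambda>a. if a \<in> C - L then 1 else 0"]) (auto simp: std_def split: if_splits)

lemma hs_std:
  assumes "L \<subseteq> C" "1 \<le> k" "card L = k"
  shows "hs C k (std C L) = C - L"
proof -
  have "L \<inter> C = L" using assms by auto
  then show ?thesis using assms unfolding hs_def std_def by auto
qed

lemma card_std_gen: "(L :: 'n::finite set) \<subseteq> C \<Longrightarrow> card L = k \<Longrightarrow> 1 \<le> k \<Longrightarrow> card (hs C k (std C L)) = card C - k"
  using hs_std[of L C k] card_Diff_subset[of L C] by simp

locale U =
  fixes C :: "'n::finite set" and k :: nat and w :: "real ^ ('n \<times> 'n set)" and u :: real
  assumes cC: "2 \<le> card C" and k1: "1 \<le> k" and kC: "k \<le> card C - 1"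
    and hyp: "\<And>G. is_DAG G \<Longrightarrow> card {a\<in>C. k \<le> dg C G a} = card C - k \<Longrightarrow> w \<bullet> eta G = u"
begin

lemma hyp_gr: "is_DAG (gr \<pi>) \<Longrightarrow> card (hs C k \<pi>) = card C - k \<Longrightarrow> (\<Sum>a\<in>UNIV. WW w a (\<pi> a)) = u"
  using hyp[of "gr \<pi>"] unfolding inner_gr hs_def dg_gr by simp

lemma change:
  assumes "is_DAG (gr \<pi>)" "is_DAG (gr (\<pi>(x := B)))" "card (hs C k \<pi>) = card C - k"
    "hs C k (\<pi>(x := B)) = hs C k \<pi>"
  shows "WW w x B = WW w x (\<pi> x)"
proof -
  have "(\<Sum>a\<in>UNIV. WW w a ((\<pi>(x := B)) a)) = u" by (rule hyp_gr[OF assms(2)]) (simp only: assms(3,4))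
  moreover have "(\<Sum>a\<in>UNIV. WW w a (\<pi> a)) = u" by (rule hyp_gr[OF assms(1,3)])
  moreover have "(\<Sum>a\<in>UNIV. WW w a ((\<pi>(x := B)) a)) = WW w x B + (\<Sum>a\<in>UNIV - {x}. WW w a (\<pi> a))"
    by (simp add: sum.remove[of UNIV x])
  moreover have "(\<Sum>a\<in>UNIV. WW w a (\<pi> a)) = WW w x (\<pi> x) + (\<Sum>a\<in>UNIV - {x}. WW w a (\<pi> a))"
    by (simp add: sum.remove[of UNIV x])
  ultimately show ?thesis by linarith
qed

lemma kCC: "k \<le> card C" using kC by linarith

lemma card_std: "L \<subseteq> C \<Longrightarrow> card L = k \<Longrightarrow> card (hs C k (std C L)) = card C - k"
  using hs_std[of L C k] k1 by (simp add: card_Diff_subset finite_subset)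

lemma Z1:
  assumes "x \<notin> C" "(x, B) \<in> Ups"
  shows "w $ (x, B) = 0"
proof -
  obtain L where L: "L \<subseteq> C" "card L = k" using exists_subset_between[of "{}" k C] kCC by auto
  have "std C L x = {}" using assms by (simp add: std_def)
  have d: "is_DAG (gr ((std C L)(x := B)))"
    by (rule acyclic_rank[where r="\<lambda>a. if a = x then 2 else if a \<in> C - L then 1 else 0"])
      (use assms L in \<open>auto simp: std_def Ups_def split: if_splits\<close>)
  have "WW w x B = WW w x (std C L x)"
    by (rule change[OF std_DAG d card_std[OF L] hs_upd]) (use assms in auto)
  then have "WW w x B = 0" using \<open>std C L x = {}\<close> by simp
  then show ?thesis using assms by (simp add: WW_def)
qed

lemma Z2:
  assumes "x \<in> C" "(x, B) \<in> Ups" "card (B \<inter> C) < k"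
  shows "w $ (x, B) = 0"
proof -
  have "card (insert x (B \<inter> C)) \<le> Suc (card (B \<inter> C))" by (simp add: card_insert_if)
  then have "card (insert x (B \<inter> C)) \<le> k" using assms by linarith
  then obtain L where L: "insert x (B \<inter> C) \<subseteq> L" "L \<subseteq> C" "card L = k"
    using exists_subset_between[of "insert x (B \<inter> C)" k C] kCC assms by auto
  have sx: "std C L x = {}" using L by (simp add: std_def)
  have xB: "x \<notin> B" using assms by (simp add: Ups_def)
  have d: "is_DAG (gr ((std C L)(x := B)))"
    by (rule acyclic_rank[where r="\<lambda>a. if a \<in> C - L then 2 else if a = x then 1 else 0"])
      (use assms L xB in \<open>auto simp: std_def split: if_splits\<close>)
  have "WW w x B = WW w x (std C L x)"
    by (rule change[OF std_DAG d card_std[OF L(2,3)] hs_upd]) (use assms sx k1 in auto)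
  then have "WW w x B = 0" using sx by simp
  then show ?thesis using assms by (simp add: WW_def)
qed

lemma M:
  assumes "x \<in> C" "(x, B) \<in> Ups" "k \<le> card (B \<inter> C)" "L \<subseteq> C - {x}" "card L = k"
  shows "w $ (x, B) = WW w x L"
proof -
  have L: "L \<subseteq> C" "x \<notin> L" using assms by auto
  have sx: "std C L x = L" using L assms by (simp add: std_def)
  have xB: "x \<notin> B" using assms by (simp add: Ups_def)
  have LC: "L \<inter> C = L" using L by auto
  have d: "is_DAG (gr ((std C L)(x := B)))"
    by (rule acyclic_rank[where r="\<lambda>a. if a = x then 2 else if a \<in> C - L then 1 else 0"])
      (use assms L xB in \<open>auto simp: std_def split: if_splits\<close>)
  have "WW w x B = WW w x (std C L x)"
    by (rule change[OF std_DAG d card_std[OF L(1) assms(5)] hs_upd]) (use assms sx LC in auto)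
  then show ?thesis using assms sx by (simp add: WW_def)
qed

definition mu :: "'n \<Rightarrow> real" where
  "mu x = WW w x (SOME L. L \<subseteq> C - {x} \<and> card L = k)"

lemma exL: "x \<in> C \<Longrightarrow> \<exists>L. L \<subseteq> C - {x} \<and> card L = k"
  using exists_subset_between[of "{}" k "C - {x}"] kC by (auto simp: card_Diff_singleton)

lemma M2:
  assumes "x \<in> C" "(x, B) \<in> Ups" "k \<le> card (B \<inter> C)"
  shows "w $ (x, B) = mu x"
  unfolding mu_def using M[OF assms] someI_ex[OF exL[OF assms(1)]] by blast

lemma M3:
  assumes "x \<in> C - L" "L \<subseteq> C" "card L = k"
  shows "WW w x L = mu x"
proof -
  have "L \<noteq> {}" using assms k1 by auto
  then have "(x, L) \<in> Ups" using assms by (auto simp: Ups_def)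
  moreover have "L \<inter> C = L" using assms by auto
  ultimately show ?thesis using M2[of x L] assms by (simp add: WW_def)
qed

lemma S:
  assumes "L \<subseteq> C" "card L = k"
  shows "(\<Sum>z\<in>C - L. mu z) = u"
proof -
  have "(\<Sum>a\<in>UNIV. WW w a (std C L a)) = u" by (rule hyp_gr[OF std_DAG card_std[OF assms]])
  moreover have "(\<Sum>a\<in>UNIV. WW w a (std C L a)) = (\<Sum>a\<in>UNIV. if a \<in> C - L then mu a else 0)"
    by (intro sum.cong refl) (use M3 assms in \<open>auto simp: std_def\<close>)
  moreover have "(\<Sum>a\<in>UNIV. if a \<in> C - L then mu a else 0) = (\<Sum>z\<in>C - L. mu z)"
    by (simp only: sum.If_cases finite Int_UNIV_left sum.neutral_const add_0_right Collect_mem_eq)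
  ultimately show ?thesis by simp
qed

lemma swap:
  assumes "a \<in> C" "b \<in> C" "a \<noteq> b"
  shows "mu a = mu b"
proof -
  obtain L where L: "{b} \<subseteq> L" "L \<subseteq> C - {a}" "card L = k"
    using exists_subset_between[of "{b}" k "C - {a}"] kC k1 assms by (auto simp: card_Diff_singleton)
  define L' where "L' = insert a (L - {b})"
  have fL: "finite L" by simp
  have aL: "a \<notin> L - {b}" using L by auto
  have "card (L - {b}) = k - 1" using L by (simp add: card_Diff_singleton)
  then have cL': "card L' = k" unfolding L'_def using aL k1 by (simp add: card_insert_disjoint)
  have L'C: "L' \<subseteq> C" using L assms by (auto simp: L'_def)
  define D where "D = C - L - {a}"
  have e1: "C - L = insert a D" using L assms by (auto simp: D_def)
  have e2: "C - L' = insert b D" using L assms by (auto simp: D_def L'_def)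
  have "a \<notin> D" "b \<notin> D" using L by (auto simp: D_def)
  then have "mu a + sum mu D = mu b + sum mu D"
    using S[of L] S[OF L'C cL'] L e1 e2 by (simp add: subset_Diff_insert)
  then show ?thesis by simp
qed

lemma unique: "\<exists>\<mu>. \<forall>p\<in>Ups. w $ p = \<mu> * cvec C k $ p"
proof -
  obtain x0 where x0: "x0 \<in> C" using cC by fastforce
  show ?thesis
  proof (intro exI ballI)
    fix p :: "'n \<times> 'n set" assume p: "p \<in> Ups"
    obtain x B where pxB: "p = (x, B)" by (cases p)
    have xB: "x \<notin> B" using p pxB by (simp add: Ups_def)
    show "w $ p = mu x0 * cvec C k $ p"
    proof (cases "x \<in> C")
      case False then show ?thesis using Z1[of x B] p pxB by (simp add: cvec_def)
    next
      case True
      show ?thesis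
      proof (cases "k \<le> card (B \<inter> C)")
        case False then show ?thesis using Z2[of x B] True p pxB by (simp add: cvec_def)
      next
        case kk: True
        have "mu x = mu x0" using swap[of x x0] True x0 by (cases "x = x0") auto
        then show ?thesis using M2[of x B] True kk p pxB xB by (auto simp: cvec_def)
      qed
    qed
  qed
qed

end


lemma eta_span: "eta G \<in> span ((\<lambda>p. axis p 1) ` Ups)"
proof -
  have "eta G = (\<Sum>p\<in>Ups. (eta G $ p) *\<^sub>R axis p (1::real))"
  proof (rule vec_eq_iff[THEN iffD2], rule allI)
    fix q :: "'a \<times> 'a set"
    have "(\<Sum>p\<in>Ups. (eta G $ p) *\<^sub>R axis p (1::real)) $ q = (\<Sum>p\<in>Ups. if p = q then eta G $ p else 0)"
      by (simp add: sum_component axis_def if_distrib cong: if_cong)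
    also have "\<dots> = (if q \<in> Ups then eta G $ q else 0)"
      by (simp add: sum.delta')
    also have "\<dots> = eta G $ q" by (simp add: eta_def)
    finally show "eta G $ q = (\<Sum>p\<in>Ups. (eta G $ p) *\<^sub>R axis p (1::real)) $ q" by simp
  qed
  also have "\<dots> \<in> span ((\<lambda>p. axis p 1) ` Ups)"
    by (intro span_sum span_scale span_base) auto
  finally show ?thesis .
qed

lemma eta_empty: "eta {} = 0"
  by (auto simp: eta_def vec_eq_iff Ups_def pa_def)

lemma DAG_empty: "is_DAG {}"
  by (simp add: is_DAG_def acyclic_def)

theorem corollary4:
  fixes C :: "'n::finite set" and k :: nat
  assumes "card C \<ge> 2" and "1 \<le> k" and "k \<le> card C - 1"
  shows "family_polytope \<subseteq> {v :: real ^ ('n \<times> 'n set). gen_cluster_lhs C k v \<le> real (card C) - real k}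
     \<and> SE_facet {v \<in> (family_polytope :: (real ^ ('n \<times> 'n set)) set).
                   gen_cluster_lhs C k v = real (card C) - real k}"
proof -
  define P where "P = (family_polytope :: (real ^ ('n \<times> 'n set)) set)"
  define r where "r = real (card C) - real k"
  define c where "c = cvec C k"
  define F where "F = {v \<in> P. c \<bullet> v = r}"
  have kC: "k \<le> card C" using assms by linarith
  have P_def': "P = convex hull {eta G | G. is_DAG G}" unfolding P_def family_polytope_def ..
  have cvP: "convex P" unfolding P_def' by simp
  have etaP: "is_DAG G \<Longrightarrow> eta G \<in> P" for G :: "('n \<times> 'n) set" unfolding P_def' by (rule hull_inc) auto
  have c_eta: "is_DAG G \<Longrightarrow> c \<bullet> eta G = real (card {a\<in>C. k \<le> dg C G a})" for G :: "('n \<times> 'n) set"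
    unfolding c_def lhs_inner[symmetric] using lhs_eta assms(2) by blast
  have r_eq: "real (card C - k) = r" unfolding r_def using kC by (simp add: of_nat_diff)
  have valid: "P \<subseteq> {v. c \<bullet> v \<le> r}"
    unfolding P_def'
  proof (rule hull_minimal)
    show "{eta G |G. is_DAG G} \<subseteq> {v. c \<bullet> v \<le> r}"
    proof
      fix v :: "real ^ ('n \<times> 'n set)" assume "v \<in> {eta G |G. is_DAG G}"
      then obtain G where G: "is_DAG G" "v = eta G" by blast
      have "card {a\<in>C. k \<le> dg C G a} \<le> card C - k" by (rule high_bound[OF G(1) kC])
      then have "real (card {a\<in>C. k \<le> dg C G a}) \<le> r" using r_eq by linarith
      then show "v \<in> {v. c \<bullet> v \<le> r}" using c_eta G by simp
    qed
  qed (rule convex_halfspace_le)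
  have SE: "SE_objective c"
    unfolding SE_objective_def using c_eta SE_invariant by metis
  obtain L where L: "L \<subseteq> C" "card L = k" using exists_subset_between[of "{}" k C] kC by auto
  define x0 where "x0 = eta (gr (std C L))"
  have tight_iff: "is_DAG G \<Longrightarrow> card {a\<in>C. k \<le> dg C G a} = card C - k \<Longrightarrow> eta G \<in> F" for G :: "('n \<times> 'n) set"
    unfolding F_def using etaP c_eta r_eq by simp
  have x0F: "x0 \<in> F" unfolding x0_def
    by (rule tight_iff[OF std_DAG]) (use card_std_gen[OF L assms(2)] in \<open>simp add: hs_def dg_gr\<close>)
  have Fne: "F \<noteq> {}" using x0F by blast
  have FPI: "F = P \<inter> {x. c \<bullet> x = r}" by (auto simp: F_def)
  have face: "F face_of P" unfolding FPI
    by (rule face_of_Int_supporting_hyperplane_le[OF cvP]) (use valid in auto)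
  have rpos: "r > 0" unfolding r_def using assms by linarith
  have "eta {} \<in> P" using etaP[OF DAG_empty] .
  moreover have "c \<bullet> eta {} = 0" by (simp add: eta_empty)
  ultimately have FneP: "F \<noteq> P" using rpos F_def by force
  have lt: "aff_dim F < aff_dim P" by (rule face_of_aff_dim_lt[OF cvP face FneP])
  define AX where "AX = (\<lambda>p. axis p (1::real)) ` (Ups :: ('n \<times> 'n set) set)"
  have PAX: "P \<subseteq> span AX" unfolding P_def'
    by (rule hull_minimal) (use eta_span in \<open>auto simp: AX_def intro: subspace_imp_convex subspace_span\<close>)
  have "aff_dim P \<le> aff_dim (span AX)" by (rule aff_dim_subset[OF PAX])
  also have "\<dots> = int (dim AX)" by (simp add: aff_dim_subspace)
  also have "dim AX \<le> card AX" by (rule dim_le_card[OF span_superset]) (simp add: AX_def)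
  also have "card AX \<le> card (Ups :: ('n \<times> 'n set) set)" unfolding AX_def by (rule card_image_le) simp
  finally have upper: "aff_dim P \<le> int (card (Ups :: ('n \<times> 'n set) set))" by simp
  define D where "D = (+) (- x0) ` F"
  have affF: "aff_dim F = int (dim D)" unfolding D_def by (rule aff_dim_eq_dim[OF hull_inc[OF x0F]])
  define Orth where "Orth = {y \<in> (UNIV :: (real ^ ('n \<times> 'n set)) set). \<forall>x\<in>span D. orthogonal x y}"
  have dimsum: "dim Orth + dim (span D) = dim (UNIV :: (real ^ ('n \<times> 'n set)) set)"
    unfolding Orth_def by (rule dim_subspace_orthogonal_to_vectors) (auto simp: subspace_span subspace_UNIV)
  have dimU: "dim (UNIV :: (real ^ ('n \<times> 'n set)) set) = CARD('n \<times> 'n set)" by simp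
  define AXc where "AXc = (\<lambda>p. axis p (1::real)) ` (- (Ups :: ('n \<times> 'n set) set))"
  have Osub: "Orth \<subseteq> span (insert c AXc)"
  proof
    fix y assume yOrth: "y \<in> Orth"
    have hyp: "y \<bullet> eta G = y \<bullet> x0" if G: "is_DAG G" "card {a\<in>C. k \<le> dg C G a} = card C - k"
      for G :: "('n \<times> 'n) set"
    proof -
      have "eta G \<in> F" by (rule tight_iff[OF G])
      then have "- x0 + eta G \<in> span D" unfolding D_def by (intro span_base) auto
      then have "orthogonal (- x0 + eta G) y" using yOrth Orth_def by blast
      then have "(- x0 + eta G) \<bullet> y = 0" by (simp add: orthogonal_def)
      then have "(eta G - x0) \<bullet> y = 0" by simp
      then have "eta G \<bullet> y - x0 \<bullet> y = 0" by (simp only: inner_diff_left)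
      then show ?thesis by (simp only: inner_commute[of y])
    qed
    interpret U C k y "y \<bullet> x0"
      by unfold_locales (use assms hyp in auto)
    obtain \<mu> where mu: "\<forall>p\<in>Ups. y $ p = \<mu> * cvec C k $ p" using unique by blast
    have "y = \<mu> *\<^sub>R c + (\<Sum>p\<in>- Ups. (y $ p - \<mu> * c $ p) *\<^sub>R axis p (1::real))"
    proof (rule vec_eq_iff[THEN iffD2], rule allI)
      fix q :: "'n \<times> 'n set"
      have "(\<Sum>p\<in>- Ups. (y $ p - \<mu> * c $ p) *\<^sub>R axis p (1::real)) $ q
          = (\<Sum>p\<in>- Ups. if p = q then y $ p - \<mu> * c $ p else 0)"
        by (simp add: sum_component axis_def if_distrib cong: if_cong)
      also have "\<dots> = (if q \<in> - Ups then y $ q - \<mu> * c $ q else 0)"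
        by (simp add: sum.delta')
      finally show "y $ q = (\<mu> *\<^sub>R c + (\<Sum>p\<in>- Ups. (y $ p - \<mu> * c $ p) *\<^sub>R axis p (1::real))) $ q"
        using mu c_def by auto
    qed
    also have "\<dots> \<in> span (insert c AXc)"
      by (intro span_add span_scale span_sum span_base) (auto simp: AXc_def)
    finally show "y \<in> span (insert c AXc)" .
  qed
  have "dim Orth \<le> card (insert c AXc)" by (rule dim_le_card[OF Osub]) (simp add: AXc_def)
  also have "\<dots> \<le> Suc (card AXc)" using finite_imageI[of _ "\<lambda>p. axis p (1::real)"] by (simp add: card_insert_if AXc_def)
  also have "card AXc \<le> card (- (Ups :: ('n \<times> 'n set) set))" unfolding AXc_def by (rule card_image_le) simp
  also have "card (- (Ups :: ('n \<times> 'n set) set)) = CARD('n \<times> 'n set) - card (Ups :: ('n \<times> 'n set) set)"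
    by (simp add: Compl_eq_Diff_UNIV card_Diff_subset)
  finally have "dim Orth \<le> Suc (CARD('n \<times> 'n set) - card (Ups :: ('n \<times> 'n set) set))" by simp
  moreover have "card (Ups :: ('n \<times> 'n set) set) \<le> CARD('n \<times> 'n set)" by (rule card_mono) auto
  ultimately have lower: "int (card (Ups :: ('n \<times> 'n set) set)) - 1 \<le> aff_dim F"
    using dimsum dimU affF by simp
  have affeq: "aff_dim F = aff_dim P - 1" using lower upper lt by linarith
  have facet: "F facet_of P" unfolding facet_of_def using face Fne affeq by blast
  have Feq: "{v \<in> (family_polytope :: (real ^ ('n \<times> 'n set)) set). gen_cluster_lhs C k v = real (card C) - real k} = F"
    unfolding F_def P_def c_def r_def lhs_inner ..
  show ?thesis
  proof
    show "family_polytope \<subseteq> {v :: real ^ ('n \<times> 'n set). gen_cluster_lhs C k v \<le> real (card C) - real k}"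
      using valid unfolding P_def c_def r_def lhs_inner .
    show "SE_facet {v \<in> (family_polytope :: (real ^ ('n \<times> 'n set)) set). gen_cluster_lhs C k v = real (card C) - real k}"
      unfolding Feq SE_facet_def
      using facet SE valid by (auto simp: P_def F_def)
  qed
qed

end
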